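(* Let $n\ge1$. For every $\sigma\in\mathfrak{S}_{n+1}$, $\psi_{FV}(\sigma)=\psi_{YZL}(\Psi(\sigma))$.
   Context: For $\sigma\in\mathfrak{S}_{n+1}$ define $\psi_{FV}(\sigma)=(s_1\cdots s_n,(p_1,\dots,p_n))$ where, with convention $\sigma(0)=\sigma(n+2)=0$ and peaks/valleys/double ascents/double descents being values $\sigma(i)$ with $\sigma(i-1)<\sigma(i)>\sigma(i+1)$ / $\sigma(i-1)>\sigma(i)<\sigma(i+1)$ / $\sigma(i-1)<\sigma(i)<\sigma(i+1)$ / $\sigma(i-1)>\sigma(i)>\sigma(i+1)$: $s_i=\textsc{U}$ if the value $i$ is a valley, $\textsc{D}$ if a peak, $\textsc{L}_b$ if a double ascent, $\textsc{L}_r$ if a double descent; and $p_i=\#\{j: \sigma^{-1}(i)<j<n+1,\ \sigma(j)<i<\sigma(j+1)\}$. Define $\psi_{YZL}(\sigma)=(s_1\cdots s_n,(p_1,\dots,p_n))$ by $s_i=\textsc{U}$ if $i<\sigma(i)$ and $i+1\le\sigma^{-1}(i+1)$; $s_i=\textsc{D}$ if $i\ge\sigma(i)$ and $i+1>\sigma^{-1}(i+1)$; $s_i=\textsc{L}_b$ if $i<\sigma(i)$ and $i+1>\sigma^{-1}(i+1)$; $s_i=\textsc{L}_r$ if $i\ge\sigma(i)$ and $i+1\le\sigma^{-1}(i+1)$; and $p_i=\mathsf{nest}_i\sigma=\#\{j:j<i<\sigma(i)<\sigma(j)\text{ or }\sigma(j)<\sigma(i)\le i<j\}$. The map $\Phi:\mathfrak{S}_m\to\mathfrak{S}_m$: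 for $\rho\in\mathfrak{S}_m$, a letter $\rho(i)$ is a descent top if $i\le m-1$ and $\rho(i)>\rho(i+1)$, a descent bottom if $i\ge2$ and $\rho(i-1)>\rho(i)$; otherwise a nondescent top (resp. bottom). For $x=\rho(i)$ let $c(x)=\#\{j:i<j<m,\ \rho(j+1)<x<\rho(j)\}$. Let $f$ (resp. $g$) be the increasing word of descent bottoms (resp. nondescent bottoms); $f'$ the arrangement of descent tops in which each letter $x$ has exactly $c(x)$ larger letters to its left; $g'$ the arrangement of nondescent tops in which each letter $x$ has exactly $c(x)$ smaller letters to its right. With the two-row array of top row $fg$ and bottom row $f'g'$, $\Phi(\rho)=\tau$ where $\tau(b)=a$ for each column (top $a$, bottom $b$). The map $\Psi:\mathfrak{S}_m\to\mathfrak{S}_m$: $\hat\rho\in\mathfrak{S}_{m+1}$ is $\hat\rho(i)=\rho(i)+1$ ($i\le m$), $\hat\rho(m+1)=1$; $\tau=\Phi(\hat\rho)$ satisfies $\tau(1)=m+1$, and $\Psi(\rho)=\tau(2)\cdots\tau(m+1)$. Here $\Psi$ is applied with $m=n+1$. *)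

theory Defs
  imports "HOL-Combinatorics.Permutations"
begin

text \<open>Permutations of [m] = {1..m} are functions nat => nat with
  sigma permutes {1..m} (identity outside {1..m}).  Letters of the words.\<close>

datatype letter = U | D | Lb | Lr

type_synonym code = "letter list \<times> nat list"

definition ext0 :: "nat \<Rightarrow> (nat \<Rightarrow> nat) \<Rightarrow> nat \<Rightarrow> nat" where
  "ext0 n \<sigma> i = (if 1 \<le> i \<and> i \<le> n + 1 then \<sigma> i else 0)"

definition fv_letter :: "nat \<Rightarrow> (nat \<Rightarrow> nat) \<Rightarrow> nat \<Rightarrow> letter" where
  "fv_letter n \<sigma> i =
     (let k = inv \<sigma> i; a = ext0 n \<sigma> (k - 1); b = ext0 n \<sigma> (k + 1) in
      if a > i \<and> i < b then U
      else if a < i \<and> i > b then D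
      else if a < i \<and> i < b then Lb
      else Lr)"

definition fv_p :: "nat \<Rightarrow> (nat \<Rightarrow> nat) \<Rightarrow> nat \<Rightarrow> nat" where
  "fv_p n \<sigma> i = card {j. inv \<sigma> i < j \<and> j < n + 1 \<and> \<sigma> j < i \<and> i < \<sigma> (j + 1)}"

definition psiFV :: "nat \<Rightarrow> (nat \<Rightarrow> nat) \<Rightarrow> code" where
  "psiFV n \<sigma> = (map (fv_letter n \<sigma>) [1..<n+1], map (fv_p n \<sigma>) [1..<n+1])"

definition yzl_letter :: "(nat \<Rightarrow> nat) \<Rightarrow> nat \<Rightarrow> letter" where
  "yzl_letter \<sigma> i =
     (if i < \<sigma> i \<and> i + 1 \<le> inv \<sigma> (i + 1) then U
      else if i \<ge> \<sigma> i \<and> i + 1 > inv \<sigma> (i + 1) then D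
      else if i < \<sigma> i \<and> i + 1 > inv \<sigma> (i + 1) then Lb
      else Lr)"

definition nest :: "nat \<Rightarrow> (nat \<Rightarrow> nat) \<Rightarrow> nat \<Rightarrow> nat" where
  "nest n \<sigma> i = card {j \<in> {1..n+1}.
      (j < i \<and> i < \<sigma> i \<and> \<sigma> i < \<sigma> j) \<or> (\<sigma> j < \<sigma> i \<and> \<sigma> i \<le> i \<and> i < j)}"

definition psiYZL :: "nat \<Rightarrow> (nat \<Rightarrow> nat) \<Rightarrow> code" where
  "psiYZL n \<sigma> = (map (yzl_letter \<sigma>) [1..<n+1], map (nest n \<sigma>) [1..<n+1])"

definition desc_tops :: "nat \<Rightarrow> (nat \<Rightarrow> nat) \<Rightarrow> nat set" where
  "desc_tops m \<rho> = {\<rho> i | i. 1 \<le> i \<and> i \<le> m - 1 \<and> \<rho> i > \<rho> (i + 1)}"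

definition nondesc_tops :: "nat \<Rightarrow> (nat \<Rightarrow> nat) \<Rightarrow> nat set" where
  "nondesc_tops m \<rho> = {1..m} - desc_tops m \<rho>"

definition desc_bots :: "nat \<Rightarrow> (nat \<Rightarrow> nat) \<Rightarrow> nat set" where
  "desc_bots m \<rho> = {\<rho> i | i. 2 \<le> i \<and> i \<le> m \<and> \<rho> (i - 1) > \<rho> i}"

definition nondesc_bots :: "nat \<Rightarrow> (nat \<Rightarrow> nat) \<Rightarrow> nat set" where
  "nondesc_bots m \<rho> = {1..m} - desc_bots m \<rho>"

definition cstat :: "nat \<Rightarrow> (nat \<Rightarrow> nat) \<Rightarrow> nat \<Rightarrow> nat" where
  "cstat m \<rho> x = card {j. inv \<rho> x < j \<and> j < m \<and> \<rho> (j + 1) < x \<and> x < \<rho> j}"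

definition fword :: "nat \<Rightarrow> (nat \<Rightarrow> nat) \<Rightarrow> nat list" where
  "fword m \<rho> = sorted_list_of_set (desc_bots m \<rho>)"

definition gword :: "nat \<Rightarrow> (nat \<Rightarrow> nat) \<Rightarrow> nat list" where
  "gword m \<rho> = sorted_list_of_set (nondesc_bots m \<rho>)"

definition fword' :: "nat \<Rightarrow> (nat \<Rightarrow> nat) \<Rightarrow> nat list" where
  "fword' m \<rho> = (THE w. distinct w \<and> set w = desc_tops m \<rho> \<and>
      (\<forall>k < length w. card {l. l < k \<and> w ! l > w ! k} = cstat m \<rho> (w ! k)))"

definition gword' :: "nat \<Rightarrow> (nat \<Rightarrow> nat) \<Rightarrow> nat list" where
  "gword' m \<rho> = (THE w. distinct w \<and> set w = nondesc_tops m \<rho> \<and>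
      (\<forall>k < length w. card {l. k < l \<and> l < length w \<and> w ! l < w ! k} = cstat m \<rho> (w ! k)))"

text \<open>Phi(rho) = tau with tau(b) = a for each column (top a, bottom b) of the
  two-row array with top row fg and bottom row f'g'; identity outside [m].\<close>
definition Phi :: "nat \<Rightarrow> (nat \<Rightarrow> nat) \<Rightarrow> nat \<Rightarrow> nat" where
  "Phi m \<rho> b = (if b \<in> {1..m} then
      (case map_of (zip (fword' m \<rho> @ gword' m \<rho>) (fword m \<rho> @ gword m \<rho>)) b of
         Some a \<Rightarrow> a | None \<Rightarrow> b)
     else b)"

definition rho_hat :: "nat \<Rightarrow> (nat \<Rightarrow> nat) \<Rightarrow> nat \<Rightarrow> nat" where
  "rho_hat m \<rho> i = (if 1 \<le> i \<and> i \<le> m then \<rho> i + 1 else if i = m + 1 then 1 else i)"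

definition Psi :: "nat \<Rightarrow> (nat \<Rightarrow> nat) \<Rightarrow> nat \<Rightarrow> nat" where
  "Psi m \<rho> i = (if 1 \<le> i \<and> i \<le> m then Phi (m + 1) (rho_hat m \<rho>) (i + 1) else i)"

end

theory Submission
  imports Defs
begin



definition lpA :: "(nat \<Rightarrow> nat) \<Rightarrow> nat list \<Rightarrow> bool" where
  "lpA c w \<longleftrightarrow> (\<forall>x\<in>set w. length (filter (\<lambda>y. x < y) (takeWhile (\<lambda>y. y \<noteq> x) w)) = c x)"

definition lpB :: "(nat \<Rightarrow> nat) \<Rightarrow> nat list \<Rightarrow> bool" where
  "lpB c w \<longleftrightarrow> (\<forall>x\<in>set w. length (filter (\<lambda>y. y < x) (takeWhile (\<lambda>y. y \<noteq> x) w)) = c x)"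

lemma tw_removeAll:
  "x \<noteq> m \<Longrightarrow> takeWhile (\<lambda>y. y\<noteq>x) (removeAll m w) = removeAll m (takeWhile (\<lambda>y. y\<noteq>x) w)"
  apply (induct w)
   apply simp
  apply (case_tac "a = m")
   apply simp
  apply (case_tac "a = x")
   apply simp_all
  done

lemma filter_removeAll_less:
  "\<not> P m \<Longrightarrow> filter P (removeAll m t) = filter P t"
  by (induct t) auto

lemma lpA_remove:
  assumes "lpA c w" "\<forall>y\<in>set w. m \<le> y"
  shows "lpA c (removeAll m w)"
  unfolding lpA_def
proof
  fix x assume x: "x \<in> set (removeAll m w)"
  hence xm: "x \<noteq> m" and xw: "x \<in> set w" by auto
  have "m \<le> x" using assms(2) xw by auto
  hence "\<not> x < m" by simp
  hence "filter (\<lambda>y. x < y) (takeWhile (\<lambda>y. y \<noteq> x) (removeAll m w))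
      = filter (\<lambda>y. x < y) (takeWhile (\<lambda>y. y \<noteq> x) w)"
    using tw_removeAll[OF xm] filter_removeAll_less[of "\<lambda>y. x < y" m] by simp
  thus "length (filter (\<lambda>y. x < y) (takeWhile (\<lambda>y. y \<noteq> x) (removeAll m w))) = c x"
    using assms(1) xw unfolding lpA_def by simp
qed

lemma lpB_remove:
  assumes "lpB c w" "\<forall>y\<in>set w. y \<le> m"
  shows "lpB c (removeAll m w)"
  unfolding lpB_def
proof
  fix x assume x: "x \<in> set (removeAll m w)"
  hence xm: "x \<noteq> m" and xw: "x \<in> set w" by auto
  have "x \<le> m" using assms(2) xw by auto
  hence "\<not> m < x" by simp
  hence "filter (\<lambda>y. y < x) (takeWhile (\<lambda>y. y \<noteq> x) (removeAll m w))
      = filter (\<lambda>y. y < x) (takeWhile (\<lambda>y. y \<noteq> x) w)"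
    using tw_removeAll[OF xm] filter_removeAll_less[of "\<lambda>y. y < x" m] by simp
  thus "length (filter (\<lambda>y. y < x) (takeWhile (\<lambda>y. y \<noteq> x) (removeAll m w))) = c x"
    using assms(1) xw unfolding lpB_def by simp
qed

lemma lpA_unique:
  "distinct w1 \<Longrightarrow> distinct w2 \<Longrightarrow> set w1 = set w2 \<Longrightarrow> lpA c w1 \<Longrightarrow> lpA c w2 \<Longrightarrow> w1 = w2"
proof (induction "length w1" arbitrary: w1 w2)
  case 0
  then show ?case by simp
next
  case (Suc n)
  define m where "m = Min (set w1)"
  have ne: "set w1 \<noteq> {}" using Suc(2) by auto
  have m1: "m \<in> set w1" using ne unfolding m_def by simp
  have mle: "\<forall>y\<in>set w1. m \<le> y" unfolding m_def by simp
  obtain u1 v1 where w1: "w1 = u1 @ m # v1" using m1 split_list by metis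
  obtain u2 v2 where w2: "w2 = u2 @ m # v2" using m1 Suc(5) split_list by metis
  have nu1: "m \<notin> set u1" "m \<notin> set v1" using Suc(3) w1 by auto
  have nu2: "m \<notin> set u2" "m \<notin> set v2" using Suc(4) w2 by auto
  have tw1: "takeWhile (\<lambda>y. y \<noteq> m) w1 = u1" proof -
    have "\<forall>x\<in>set u1. x \<noteq> m" using nu1 by blast
    thus ?thesis using w1 by simp
  qed
  have tw2: "takeWhile (\<lambda>y. y \<noteq> m) w2 = u2" proof -
    have "\<forall>x\<in>set u2. x \<noteq> m" using nu2 by blast
    thus ?thesis using w2 by simp
  qed
  have f1: "filter (\<lambda>y. m < y) u1 = u1"
  proof -
    have "\<forall>x\<in>set u1. m < x"
    proof
      fix x assume "x \<in> set u1" then have "x \<noteq> m" "m \<le> x" using nu1 mle w1 by auto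
      thus "m < x" by simp
    qed
    thus ?thesis by (simp add: filter_id_conv)
  qed
  have f2: "filter (\<lambda>y. m < y) u2 = u2"
  proof -
    have "\<forall>x\<in>set u2. m < x"
    proof
      fix x assume "x \<in> set u2" then have "x \<noteq> m" "m \<le> x" using nu2 mle w2 Suc(5) by auto
      thus "m < x" by simp
    qed
    thus ?thesis by (simp add: filter_id_conv)
  qed
  have l1: "length u1 = c m" using Suc(6) m1 tw1 f1 unfolding lpA_def by metis
  have l2: "length u2 = c m" using Suc(7) m1 Suc(5) tw2 f2 unfolding lpA_def by metis
  have r1: "removeAll m w1 = u1 @ v1" using nu1 w1 by simp
  have r2: "removeAll m w2 = u2 @ v2" using nu2 w2 by simp
  have "removeAll m w1 = removeAll m w2"
  proof (rule Suc(1))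
    show "n = length (removeAll m w1)" using Suc(2) r1 w1 by simp
    show "distinct (removeAll m w1)" using Suc(3) by (simp add: distinct_removeAll)
    show "distinct (removeAll m w2)" using Suc(4) by (simp add: distinct_removeAll)
    show "set (removeAll m w1) = set (removeAll m w2)" using Suc(5) by auto
    show "lpA c (removeAll m w1)" using lpA_remove[OF Suc(6) mle] .
    show "lpA c (removeAll m w2)" using lpA_remove[OF Suc(7)] mle Suc(5) by auto
  qed
  hence "u1 @ v1 = u2 @ v2" using r1 r2 by simp
  hence "u1 = u2 \<and> v1 = v2" using l1 l2 by (simp add: append_eq_append_conv)
  thus ?case using w1 w2 by simp
qed

lemma lpB_unique:
  "distinct w1 \<Longrightarrow> distinct w2 \<Longrightarrow> set w1 = set w2 \<Longrightarrow> lpB c w1 \<Longrightarrow> lpB c w2 \<Longrightarrow> w1 = w2"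
proof (induction "length w1" arbitrary: w1 w2)
  case 0
  then show ?case by simp
next
  case (Suc n)
  define m where "m = Max (set w1)"
  have ne: "set w1 \<noteq> {}" using Suc(2) by auto
  have m1: "m \<in> set w1" using ne unfolding m_def by simp
  have mle: "\<forall>y\<in>set w1. y \<le> m" unfolding m_def by simp
  obtain u1 v1 where w1: "w1 = u1 @ m # v1" using m1 split_list by metis
  obtain u2 v2 where w2: "w2 = u2 @ m # v2" using m1 Suc(5) split_list by metis
  have nu1: "m \<notin> set u1" "m \<notin> set v1" using Suc(3) w1 by auto
  have nu2: "m \<notin> set u2" "m \<notin> set v2" using Suc(4) w2 by auto
  have tw1: "takeWhile (\<lambda>y. y \<noteq> m) w1 = u1" proof -
    have "\<forall>x\<in>set u1. x \<noteq> m" using nu1 by blast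
    thus ?thesis using w1 by simp
  qed
  have tw2: "takeWhile (\<lambda>y. y \<noteq> m) w2 = u2" proof -
    have "\<forall>x\<in>set u2. x \<noteq> m" using nu2 by blast
    thus ?thesis using w2 by simp
  qed
  have f1: "filter (\<lambda>y. y < m) u1 = u1"
  proof -
    have "\<forall>x\<in>set u1. x < m"
    proof
      fix x assume "x \<in> set u1" then have "x \<noteq> m" "x \<le> m" using nu1 mle w1 by auto
      thus "x < m" by simp
    qed
    thus ?thesis by (simp add: filter_id_conv)
  qed
  have f2: "filter (\<lambda>y. y < m) u2 = u2"
  proof -
    have "\<forall>x\<in>set u2. x < m"
    proof
      fix x assume "x \<in> set u2" then have "x \<noteq> m" "x \<le> m" using nu2 mle w2 Suc(5) by auto
      thus "x < m" by simp
    qed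
    thus ?thesis by (simp add: filter_id_conv)
  qed
  have l1: "length u1 = c m" using Suc(6) m1 tw1 f1 unfolding lpB_def by metis
  have l2: "length u2 = c m" using Suc(7) m1 Suc(5) tw2 f2 unfolding lpB_def by metis
  have r1: "removeAll m w1 = u1 @ v1" using nu1 w1 by simp
  have r2: "removeAll m w2 = u2 @ v2" using nu2 w2 by simp
  have "removeAll m w1 = removeAll m w2"
  proof (rule Suc(1))
    show "n = length (removeAll m w1)" using Suc(2) r1 w1 by simp
    show "distinct (removeAll m w1)" using Suc(3) by (simp add: distinct_removeAll)
    show "distinct (removeAll m w2)" using Suc(4) by (simp add: distinct_removeAll)
    show "set (removeAll m w1) = set (removeAll m w2)" using Suc(5) by auto
    show "lpB c (removeAll m w1)" using lpB_remove[OF Suc(6) mle] .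
    show "lpB c (removeAll m w2)" using lpB_remove[OF Suc(7)] mle Suc(5) by auto
  qed
  hence "u1 @ v1 = u2 @ v2" using r1 r2 by simp
  hence "u1 = u2 \<and> v1 = v2" using l1 l2 by (simp add: append_eq_append_conv)
  thus ?case using w1 w2 by simp
qed

lemma lpA_exists:
  "finite S \<Longrightarrow> (\<forall>x\<in>S. c x \<le> card {y\<in>S. x < y}) \<Longrightarrow> \<exists>w. distinct w \<and> set w = S \<and> lpA c w"
proof (induction "card S" arbitrary: S)
  case 0
  then show ?case by (intro exI[of _ "[]"]) (simp add: lpA_def)
next
  case (Suc n)
  have ne: "S \<noteq> {}" using Suc(2) by auto
  define m where "m = Min S"
  have mS: "m \<in> S" using ne Suc(3) unfolding m_def by simp
  have mle: "\<forall>y\<in>S. m \<le> y" using Suc(3) unfolding m_def by simp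
  define S' where "S' = S - {m}"
  have cS': "n = card S'" using Suc(2) mS Suc(3) unfolding S'_def by simp
  have fS': "finite S'" using Suc(3) unfolding S'_def by simp
  have hyp': "\<forall>x\<in>S'. c x \<le> card {y\<in>S'. x < y}"
  proof
    fix x assume x: "x \<in> S'"
    have "{y\<in>S'. x < y} = {y\<in>S. x < y}" using x mle unfolding S'_def by force
    thus "c x \<le> card {y\<in>S'. x < y}" using Suc(4) x unfolding S'_def by simp
  qed
  obtain w' where w': "distinct w'" "set w' = S'" "lpA c w'" using Suc(1)[OF cS' fS' hyp'] by blast
  define p where "p = c m"
  have "{y\<in>S. m < y} = S'" using mle unfolding S'_def by force
  hence "p \<le> length w'" using Suc(4) mS w' distinct_card unfolding p_def by metis
  define w where "w = take p w' @ m # drop p w'"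
  have mw': "m \<notin> set w'" using w'(2) unfolding S'_def by simp
  have mt: "m \<notin> set (take p w')" "m \<notin> set (drop p w')" using mw' by (meson in_set_takeD in_set_dropD)+
  have dw: "distinct w" unfolding w_def using w'(1) mt
    by (simp add: set_take_disj_set_drop_if_distinct)
  have sw: "set w = S"
  proof -
    have "set w = insert m (set (take p w') \<union> set (drop p w'))" unfolding w_def by simp
    also have "set (take p w') \<union> set (drop p w') = set w'" by (metis append_take_drop_id set_append)
    also have "insert m (set w') = S" using w'(2) mS unfolding S'_def by auto
    finally show ?thesis .
  qed
  have mt: "m \<notin> set (take p w')" "m \<notin> set (drop p w')" using mw' by (meson in_set_takeD in_set_dropD)+
  have "lpA c w" unfolding lpA_def
  proof
    fix x assume xw: "x \<in> set w"
    show "length (filter (\<lambda>y. x < y) (takeWhile (\<lambda>y. y \<noteq> x) w)) = c x"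
    proof (cases "x = m")
      case True
      have "\<forall>z\<in>set (take p w'). z \<noteq> m" using mt by blast
      hence tw: "takeWhile (\<lambda>y. y \<noteq> x) w = take p w'" unfolding w_def using True by simp
      have "\<forall>z\<in>set (take p w'). m < z"
      proof
        fix z assume z: "z \<in> set (take p w')"
        hence "z \<in> S'" using w'(2) in_set_takeD by fast
        thus "m < z" using mle unfolding S'_def by force
      qed
      hence "filter (\<lambda>y. x < y) (take p w') = take p w'" using True by (simp add: filter_id_conv)
      thus ?thesis using tw True \<open>p \<le> length w'\<close> unfolding p_def by simp
    next
      case False
      have rw: "removeAll m w = w'" unfolding w_def using mt
        by simp
      have xw': "x \<in> set w'" using xw False unfolding w_def by (auto dest: in_set_takeD in_set_dropD)
      have "m \<le> x" using mle xw sw by auto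
      hence nxm: "\<not> x < m" by simp
      have "filter (\<lambda>y. x < y) (takeWhile (\<lambda>y. y \<noteq> x) w')
          = filter (\<lambda>y. x < y) (takeWhile (\<lambda>y. y \<noteq> x) w)"
        using tw_removeAll[OF False, of w] rw filter_removeAll_less[of "\<lambda>y. x < y" m, OF nxm] by simp
      thus ?thesis using w'(3) xw' unfolding lpA_def by metis
    qed
  qed
  thus ?case using dw sw by blast
qed

lemma lpB_exists:
  "finite S \<Longrightarrow> (\<forall>x\<in>S. c x \<le> card {y\<in>S. y < x}) \<Longrightarrow> \<exists>w. distinct w \<and> set w = S \<and> lpB c w"
proof (induction "card S" arbitrary: S)
  case 0
  then show ?case by (intro exI[of _ "[]"]) (simp add: lpB_def)
next
  case (Suc n)
  have ne: "S \<noteq> {}" using Suc(2) by auto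
  define m where "m = Max S"
  have mS: "m \<in> S" using ne Suc(3) unfolding m_def by simp
  have mle: "\<forall>y\<in>S. y \<le> m" using Suc(3) unfolding m_def by simp
  define S' where "S' = S - {m}"
  have cS': "n = card S'" using Suc(2) mS Suc(3) unfolding S'_def by simp
  have fS': "finite S'" using Suc(3) unfolding S'_def by simp
  have hyp': "\<forall>x\<in>S'. c x \<le> card {y\<in>S'. y < x}"
  proof
    fix x assume x: "x \<in> S'"
    have "{y\<in>S'. y < x} = {y\<in>S. y < x}" using x mle unfolding S'_def by force
    thus "c x \<le> card {y\<in>S'. y < x}" using Suc(4) x unfolding S'_def by simp
  qed
  obtain w' where w': "distinct w'" "set w' = S'" "lpB c w'" using Suc(1)[OF cS' fS' hyp'] by blast
  define p where "p = c m"
  have "{y\<in>S. y < m} = S'" using mle unfolding S'_def by force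
  hence "p \<le> length w'" using Suc(4) mS w' distinct_card unfolding p_def by metis
  define w where "w = take p w' @ m # drop p w'"
  have mw': "m \<notin> set w'" using w'(2) unfolding S'_def by simp
  have mt: "m \<notin> set (take p w')" "m \<notin> set (drop p w')" using mw' by (meson in_set_takeD in_set_dropD)+
  have dw: "distinct w" unfolding w_def using w'(1) mt
    by (simp add: set_take_disj_set_drop_if_distinct)
  have sw: "set w = S"
  proof -
    have "set w = insert m (set (take p w') \<union> set (drop p w'))" unfolding w_def by simp
    also have "set (take p w') \<union> set (drop p w') = set w'" by (metis append_take_drop_id set_append)
    also have "insert m (set w') = S" using w'(2) mS unfolding S'_def by auto
    finally show ?thesis .
  qed
  have mt: "m \<notin> set (take p w')" "m \<notin> set (drop p w')" using mw' by (meson in_set_takeD in_set_dropD)+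
  have "lpB c w" unfolding lpB_def
  proof
    fix x assume xw: "x \<in> set w"
    show "length (filter (\<lambda>y. y < x) (takeWhile (\<lambda>y. y \<noteq> x) w)) = c x"
    proof (cases "x = m")
      case True
      have "\<forall>z\<in>set (take p w'). z \<noteq> m" using mt by blast
      hence tw: "takeWhile (\<lambda>y. y \<noteq> x) w = take p w'" unfolding w_def using True by simp
      have "\<forall>z\<in>set (take p w'). z < m"
      proof
        fix z assume z: "z \<in> set (take p w')"
        hence "z \<in> S'" using w'(2) in_set_takeD by fast
        thus "z < m" using mle unfolding S'_def by force
      qed
      hence "filter (\<lambda>y. y < x) (take p w') = take p w'" using True by (simp add: filter_id_conv)
      thus ?thesis using tw True \<open>p \<le> length w'\<close> unfolding p_def by simp
    next
      case False
      have rw: "removeAll m w = w'" unfolding w_def using mt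
        by simp
      have xw': "x \<in> set w'" using xw False unfolding w_def by (auto dest: in_set_takeD in_set_dropD)
      have "x \<le> m" using mle xw sw by auto
      hence nxm: "\<not> m < x" by simp
      have "filter (\<lambda>y. y < x) (takeWhile (\<lambda>y. y \<noteq> x) w')
          = filter (\<lambda>y. y < x) (takeWhile (\<lambda>y. y \<noteq> x) w)"
        using tw_removeAll[OF False, of w] rw filter_removeAll_less[of "\<lambda>y. y < x" m, OF nxm] by simp
      thus ?thesis using w'(3) xw' unfolding lpB_def by metis
    qed
  qed
  thus ?case using dw sw by blast
qed


lemma tw_nth: "distinct w \<Longrightarrow> k < length w \<Longrightarrow> takeWhile (\<lambda>y. y \<noteq> w!k) w = take k w"
proof -
  assume d: "distinct w" and k: "k < length w"
  have e: "w = take k w @ w!k # drop (Suc k) w" using id_take_nth_drop[OF k] .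
  have "w!k \<notin> set (take k w)" using d k by (metis e distinct_append not_distinct_conv_prefix)
  hence "\<forall>z\<in>set (take k w). z \<noteq> w!k" by blast
  hence "takeWhile (\<lambda>y. y \<noteq> w!k) (take k w @ w!k # drop (Suc k) w) = take k w" by simp
  thus ?thesis using e by metis
qed

lemma len_filter_take: "k < length w \<Longrightarrow> length (filter P (take k w)) = card {l. l < k \<and> P (w!l)}"
proof -
  assume k: "k < length w"
  have "{i. i < length (take k w) \<and> P (take k w ! i)} = {l. l < k \<and> P (w!l)}" using k by auto
  thus ?thesis by (simp add: length_filter_conv_card)
qed

lemma lpA_iff: "distinct w \<Longrightarrow> lpA c w \<longleftrightarrow> (\<forall>k<length w. card {l. l < k \<and> w!l > w!k} = c (w!k))"
  for c :: "nat \<Rightarrow> nat"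
proof -
  assume d: "distinct w"
  have "\<And>k. k < length w \<Longrightarrow> length (filter (\<lambda>y. w!k < y) (takeWhile (\<lambda>y. y \<noteq> w!k) w)) = card {l. l < k \<and> w!l > w!k}"
    using d by (simp add: tw_nth len_filter_take)
  note H = this
  show ?thesis
  proof
    assume L: "lpA c w"
    show "\<forall>k<length w. card {l. l < k \<and> w!l > w!k} = c (w!k)"
    proof (intro allI impI)
      fix k assume k: "k < length w"
      hence "w!k \<in> set w" by simp
      thus "card {l. l < k \<and> w!l > w!k} = c (w!k)" using L H[OF k] unfolding lpA_def by metis
    qed
  next
    assume R: "\<forall>k<length w. card {l. l < k \<and> w!l > w!k} = c (w!k)"
    show "lpA c w" unfolding lpA_def
    proof
      fix x assume "x \<in> set w"
      then obtain k where k: "k < length w" "x = w!k" by (auto simp: in_set_conv_nth)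
      thus "length (filter (\<lambda>y. x < y) (takeWhile (\<lambda>y. y \<noteq> x) w)) = c x" using R H[OF k(1)] by metis
    qed
  qed
qed

lemma thm_A_THE:
  fixes S :: "nat set" and c :: "nat \<Rightarrow> nat"
  assumes "finite S" "\<forall>x\<in>S. c x \<le> card {y\<in>S. x < y}"
  shows "let w = (THE w. distinct w \<and> set w = S \<and> (\<forall>k<length w. card {l. l < k \<and> w!l > w!k} = c (w!k)))
         in distinct w \<and> set w = S \<and> (\<forall>k<length w. card {l. l < k \<and> w!l > w!k} = c (w!k))"
proof -
  have "\<exists>!w. distinct w \<and> set w = S \<and> (\<forall>k<length w. card {l. l < k \<and> w!l > w!k} = c (w!k))"
  proof (rule ex_ex1I)
    obtain w where "distinct w" "set w = S" "lpA c w" using lpA_exists[OF assms] by blast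
    thus "\<exists>w. distinct w \<and> set w = S \<and> (\<forall>k<length w. card {l. l < k \<and> w!l > w!k} = c (w!k))"
      using lpA_iff by blast
  next
    fix w1 w2 assume "distinct w1 \<and> set w1 = S \<and> (\<forall>k<length w1. card {l. l < k \<and> w1!l > w1!k} = c (w1!k))"
      "distinct w2 \<and> set w2 = S \<and> (\<forall>k<length w2. card {l. l < k \<and> w2!l > w2!k} = c (w2!k))"
    thus "w1 = w2" using lpA_unique[of w1 w2 c] lpA_iff by metis
  qed
  thus ?thesis unfolding Let_def by (rule theI')
qed

lemma len_filter_drop: "k < length w \<Longrightarrow> length (filter P (drop (Suc k) w)) = card {l. k < l \<and> l < length w \<and> P (w!l)}"
proof -
  assume k: "k < length w"
  have "length (filter P (drop (Suc k) w)) = card {i. i < length w - Suc k \<and> P (w ! (Suc k + i))}"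
    using k by (simp add: length_filter_conv_card)
  also have "\<dots> = card ((\<lambda>i. Suc k + i) ` {i. i < length w - Suc k \<and> P (w ! (Suc k + i))})"
    by (rule card_image[symmetric]) (simp add: inj_on_def)
  also have "(\<lambda>i. Suc k + i) ` {i. i < length w - Suc k \<and> P (w ! (Suc k + i))} = {l. k < l \<and> l < length w \<and> P (w!l)}"
  proof (rule set_eqI, rule iffI)
    fix l assume "l \<in> (\<lambda>i. Suc k + i) ` {i. i < length w - Suc k \<and> P (w ! (Suc k + i))}"
    thus "l \<in> {l. k < l \<and> l < length w \<and> P (w!l)}" by auto
  next
    fix l assume l: "l \<in> {l. k < l \<and> l < length w \<and> P (w!l)}"
    hence "l = Suc k + (l - Suc k)" "l - Suc k < length w - Suc k" "P (w ! (Suc k + (l - Suc k)))" by auto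
    thus "l \<in> (\<lambda>i. Suc k + i) ` {i. i < length w - Suc k \<and> P (w ! (Suc k + i))}" by blast
  qed
  finally show ?thesis .
qed

lemma tw_rev_nth: "distinct w \<Longrightarrow> k < length w \<Longrightarrow> takeWhile (\<lambda>y. y \<noteq> w!k) (rev w) = rev (drop (Suc k) w)"
proof -
  assume d: "distinct w" and k: "k < length w"
  have e: "rev w = rev (drop (Suc k) w) @ w!k # rev (take k w)"
    using id_take_nth_drop[OF k] by (metis append.assoc append_Cons append_Nil rev.simps(2) rev_append)
  have "distinct (rev w)" using d by simp
  hence "w!k \<notin> set (rev (drop (Suc k) w))" using e by (metis distinct_append not_distinct_conv_prefix)
  hence "\<forall>z\<in>set (rev (drop (Suc k) w)). z \<noteq> w!k" by blast
  hence "takeWhile (\<lambda>y. y \<noteq> w!k) (rev (drop (Suc k) w) @ w!k # rev (take k w)) = rev (drop (Suc k) w)"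
    using takeWhile_append2[of "rev (drop (Suc k) w)" "\<lambda>y. y \<noteq> w!k" "w!k # rev (take k w)"] by simp
  thus ?thesis using e by metis
qed

lemma lpB_iff: "distinct w \<Longrightarrow> lpB c (rev w) \<longleftrightarrow> (\<forall>k<length w. card {l. k < l \<and> l < length w \<and> w!l < w!k} = c (w!k))"
  for c :: "nat \<Rightarrow> nat"
proof -
  assume d: "distinct w"
  have "\<And>k. k < length w \<Longrightarrow> length (filter (\<lambda>y. y < w!k) (takeWhile (\<lambda>y. y \<noteq> w!k) (rev w))) = card {l. k < l \<and> l < length w \<and> w!l < w!k}"
    using d by (simp add: tw_rev_nth len_filter_drop rev_filter[symmetric])
  note H = this
  show ?thesis
  proof
    assume L: "lpB c (rev w)"
    show "\<forall>k<length w. card {l. k < l \<and> l < length w \<and> w!l < w!k} = c (w!k)"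
    proof (intro allI impI)
      fix k assume k: "k < length w"
      hence "w!k \<in> set (rev w)" by simp
      thus "card {l. k < l \<and> l < length w \<and> w!l < w!k} = c (w!k)" using L H[OF k] unfolding lpB_def by metis
    qed
  next
    assume R: "\<forall>k<length w. card {l. k < l \<and> l < length w \<and> w!l < w!k} = c (w!k)"
    show "lpB c (rev w)" unfolding lpB_def
    proof
      fix x assume "x \<in> set (rev w)"
      then obtain k where k: "k < length w" "x = w!k" by (auto simp: in_set_conv_nth)
      thus "length (filter (\<lambda>y. y < x) (takeWhile (\<lambda>y. y \<noteq> x) (rev w))) = c x" using R H[OF k(1)] by metis
    qed
  qed
qed

lemma thm_B_THE:
  fixes S :: "nat set" and c :: "nat \<Rightarrow> nat"
  assumes "finite S" "\<forall>x\<in>S. c x \<le> card {y\<in>S. y < x}"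
  shows "let w = (THE w. distinct w \<and> set w = S \<and> (\<forall>k<length w. card {l. k < l \<and> l < length w \<and> w!l < w!k} = c (w!k)))
         in distinct w \<and> set w = S \<and> (\<forall>k<length w. card {l. k < l \<and> l < length w \<and> w!l < w!k} = c (w!k))"
proof -
  have "\<exists>!w. distinct w \<and> set w = S \<and> (\<forall>k<length w. card {l. k < l \<and> l < length w \<and> w!l < w!k} = c (w!k))"
  proof (rule ex_ex1I)
    obtain v where v: "distinct v" "set v = S" "lpB c v" using lpB_exists[OF assms] by blast
    hence "distinct (rev v)" "set (rev v) = S" "lpB c (rev (rev v))" by auto
    thus "\<exists>w. distinct w \<and> set w = S \<and> (\<forall>k<length w. card {l. k < l \<and> l < length w \<and> w!l < w!k} = c (w!k))"
      using lpB_iff by blast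
  next
    fix w1 w2 assume a: "distinct w1 \<and> set w1 = S \<and> (\<forall>k<length w1. card {l. k < l \<and> l < length w1 \<and> w1!l < w1!k} = c (w1!k))"
      "distinct w2 \<and> set w2 = S \<and> (\<forall>k<length w2. card {l. k < l \<and> l < length w2 \<and> w2!l < w2!k} = c (w2!k))"
    hence "lpB c (rev w1)" "lpB c (rev w2)" using lpB_iff by blast+
    hence "rev w1 = rev w2" using lpB_unique[of "rev w1" "rev w2" c] a by simp
    thus "w1 = w2" by simp
  qed
  thus ?thesis unfolding Let_def by (rule theI')
qed




lemma card_step:
  assumes "a < (M::nat)"
  shows "card {j. a \<le> j \<and> j < M \<and> P j} = (if P a then 1 else 0) + card {j. Suc a \<le> j \<and> j < M \<and> P j}"
proof -
  have e: "{j. a \<le> j \<and> j < M \<and> P j} = (if P a then {a} else {}) \<union> {j. Suc a \<le> j \<and> j < M \<and> P j}"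
    using assms by (auto simp: le_eq_less_or_eq Suc_le_eq)
  have f: "finite {j. Suc a \<le> j \<and> j < M \<and> P j}" by (rule finite_subset[of _ "{..<M}"]) auto
  show ?thesis unfolding e using f by (simp add: card_Un_disjoint)
qed

lemma sorted_less_iff:
  "sorted_wrt (<) xs \<Longrightarrow> i < length xs \<Longrightarrow> j < length xs \<Longrightarrow> (xs!i < (xs!j::nat)) = (i < j)"
  by (metis linorder_neqE_nat not_less_iff_gr_or_eq sorted_wrt_nth_less)

lemma sorted_card_less:
  assumes s: "sorted_wrt (<) xs" and k: "k < length xs"
  shows "card {y \<in> set xs. y < (xs!k::nat)} = k"
proof -
  have d: "distinct xs" using s by (simp add: strict_sorted_iff)
  have "{y \<in> set xs. y < xs!k} = nth xs ` {..<k}"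
  proof (rule set_eqI, rule iffI)
    fix y assume "y \<in> {y \<in> set xs. y < xs!k}"
    then obtain i where "i < length xs" "y = xs!i" "xs!i < xs!k" by (auto simp: in_set_conv_nth)
    thus "y \<in> nth xs ` {..<k}" using sorted_less_iff[OF s _ k] by auto
  next
    fix y assume "y \<in> nth xs ` {..<k}"
    then obtain i where "i < k" "y = xs!i" by auto
    thus "y \<in> {y \<in> set xs. y < xs!k}" using sorted_less_iff[OF s _ k] k by auto
  qed
  moreover have "inj_on (nth xs) {..<k}" using d k by (intro inj_on_nth) auto
  ultimately show ?thesis by (simp add: card_image)
qed

lemma sorted_card_le:
  assumes s: "sorted_wrt (<) xs" and k: "k < length xs"
  shows "card {y \<in> set xs. y \<le> (xs!k::nat)} = Suc k"
proof -
  have "{y \<in> set xs. y \<le> xs!k} = insert (xs!k) {y \<in> set xs. y < xs!k}" using k by auto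
  thus ?thesis using sorted_card_less[OF s k] by simp
qed

locale rsetup =
  fixes M :: nat and \<rho> :: "nat \<Rightarrow> nat"
  assumes perm: "\<rho> permutes {1..M}" and lastM: "\<rho> M = 1" and M2: "2 \<le> M"
begin

abbreviation "T \<equiv> desc_tops M \<rho>"
abbreviation "B \<equiv> desc_bots M \<rho>"
abbreviation "NT \<equiv> nondesc_tops M \<rho>"
abbreviation "NB \<equiv> nondesc_bots M \<rho>"
abbreviation "c \<equiv> cstat M \<rho>"
abbreviation "\<tau> \<equiv> Phi M \<rho>"

lemma rho_in: "i \<in> {1..M} \<Longrightarrow> \<rho> i \<in> {1..M}"
  by (metis perm permutes_in_image)
lemma rho_inv[simp]: "\<rho> (inv \<rho> x) = x"
  using perm permutes_inverses(1) by metis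
lemma inv_rho[simp]: "inv \<rho> (\<rho> x) = x"
  using perm permutes_inverses(2) by metis
lemma inv_in: "x \<in> {1..M} \<Longrightarrow> inv \<rho> x \<in> {1..M}"
  using perm permutes_inv permutes_in_image by metis
lemma rho_eq_iff: "\<rho> i = x \<longleftrightarrow> i = inv \<rho> x"
  by (metis rho_inv inv_rho)

lemma T_iff: "x \<in> T \<longleftrightarrow> x \<in> {1..M} \<and> inv \<rho> x < M \<and> \<rho> (inv \<rho> x + 1) < x"
proof
  assume "x \<in> T"
  then obtain i where i: "x = \<rho> i" "1 \<le> i" "i \<le> M - 1" "\<rho> i > \<rho> (i+1)" unfolding desc_tops_def by blast
  thus "x \<in> {1..M} \<and> inv \<rho> x < M \<and> \<rho> (inv \<rho> x + 1) < x" using rho_in[of i] M2 by auto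
next
  assume a: "x \<in> {1..M} \<and> inv \<rho> x < M \<and> \<rho> (inv \<rho> x + 1) < x"
  hence "1 \<le> inv \<rho> x" using inv_in by auto
  thus "x \<in> T" unfolding desc_tops_def using a
    by (intro CollectI exI[of _ "inv \<rho> x"]) auto
qed

lemma B_iff: "x \<in> B \<longleftrightarrow> x \<in> {1..M} \<and> 2 \<le> inv \<rho> x \<and> x < \<rho> (inv \<rho> x - 1)"
proof
  assume "x \<in> B"
  then obtain i where i: "x = \<rho> i" "2 \<le> i" "i \<le> M" "\<rho> (i - 1) > \<rho> i" unfolding desc_bots_def by blast
  thus "x \<in> {1..M} \<and> 2 \<le> inv \<rho> x \<and> x < \<rho> (inv \<rho> x - 1)" using rho_in[of i] by auto
next
  assume a: "x \<in> {1..M} \<and> 2 \<le> inv \<rho> x \<and> x < \<rho> (inv \<rho> x - 1)"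
  hence "inv \<rho> x \<le> M" using inv_in by auto
  thus "x \<in> B" unfolding desc_bots_def using a
    by (intro CollectI exI[of _ "inv \<rho> x"]) auto
qed

lemma T_sub: "T \<subseteq> {1..M}" using T_iff by blast
lemma B_sub: "B \<subseteq> {1..M}" using B_iff by blast
lemma NT_eq: "NT = {1..M} - T" unfolding nondesc_tops_def by simp
lemma NB_eq: "NB = {1..M} - B" unfolding nondesc_bots_def by simp

definition "Ds = {j. 1 \<le> j \<and> j < M \<and> \<rho> (j+1) < \<rho> j}"

lemma finite_Ds: "finite Ds" unfolding Ds_def by (rule finite_subset[of _ "{..<M}"]) auto

lemma T_img: "T = \<rho> ` Ds"
proof (rule set_eqI)
  fix x show "x \<in> T \<longleftrightarrow> x \<in> \<rho> ` Ds"
  proof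
    assume "x \<in> T" thus "x \<in> \<rho> ` Ds" unfolding T_iff Ds_def using inv_in
      by (intro image_eqI[of _ _ "inv \<rho> x"]) auto
  next
    assume "x \<in> \<rho> ` Ds"
    then obtain j where j: "j \<in> Ds" "x = \<rho> j" by auto
    thus "x \<in> T" unfolding T_iff Ds_def using rho_in[of j] by auto
  qed
qed

lemma B_img: "B = (\<lambda>j. \<rho> (j+1)) ` Ds"
proof (rule set_eqI)
  fix x show "x \<in> B \<longleftrightarrow> x \<in> (\<lambda>j. \<rho> (j+1)) ` Ds"
  proof
    assume x: "x \<in> B"
    hence "inv \<rho> x \<le> M" using inv_in B_iff by auto
    thus "x \<in> (\<lambda>j. \<rho> (j+1)) ` Ds" using x unfolding B_iff Ds_def
      by (intro image_eqI[of _ _ "inv \<rho> x - 1"]) auto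
  next
    assume "x \<in> (\<lambda>j. \<rho> (j+1)) ` Ds"
    then obtain j where j: "j \<in> Ds" "x = \<rho> (j+1)" by auto
    thus "x \<in> B" unfolding B_iff Ds_def using rho_in[of "j+1"] by auto
  qed
qed

lemma inj_rho: "inj_on \<rho> A" by (rule inj_on_inverseI[of _ "inv \<rho>"]) simp
lemma inj_rho1: "inj_on (\<lambda>j. \<rho> (Suc j)) A" by (rule inj_on_inverseI[of _ "\<lambda>y. inv \<rho> y - 1"]) simp

lemma card_TB: "card T = card B"
  unfolding T_img B_img by (simp add: card_image inj_rho inj_rho1)

lemma finT: "finite T" by (rule finite_subset[OF T_sub]) simp
lemma finB: "finite B" by (rule finite_subset[OF B_sub]) simp

lemma count_key:
  assumes x: "x \<in> {1..M}"
  shows "card {t\<in>T. t < x} + c x + (if x \<in> T then 1 else 0) \<le> card {b\<in>B. b < x}"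
proof -
  define A1 where "A1 = {j\<in>Ds. \<rho> j < x}"
  define C where "C = {j. inv \<rho> x < j \<and> j < M \<and> \<rho> (j + 1) < x \<and> x < \<rho> j}"
  define E where "E = {j\<in>Ds. \<rho> j = x}"
  have cC: "c x = card C" unfolding C_def cstat_def by simp
  have "{t\<in>T. t < x} = \<rho> ` A1" unfolding T_img A1_def by auto
  hence c1: "card {t\<in>T. t < x} = card A1" by (simp add: card_image inj_rho)
  have "{b\<in>B. b < x} = (\<lambda>j. \<rho> (j+1)) ` {j\<in>Ds. \<rho> (j+1) < x}" unfolding B_img by auto
  hence c2: "card {b\<in>B. b < x} = card {j\<in>Ds. \<rho> (j+1) < x}" by (simp add: card_image inj_rho1)
  have cE: "card E = (if x \<in> T then 1 else 0)"
  proof (cases "x \<in> T")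
    case True
    have "E = {inv \<rho> x}"
    proof
      show "E \<subseteq> {inv \<rho> x}" unfolding E_def using rho_eq_iff by auto
      have "inv \<rho> x \<in> Ds" using True unfolding T_iff Ds_def using inv_in by auto
      thus "{inv \<rho> x} \<subseteq> E" unfolding E_def by auto
    qed
    thus ?thesis using True by simp
  next
    case False
    have "E = {}" using False unfolding E_def T_img by auto
    thus ?thesis using False by simp
  qed
  have fin: "finite A1" "finite C" "finite E"
    unfolding A1_def E_def C_def using finite_Ds by (auto intro: finite_subset[of _ "{..<M}"])
  have "1 \<le> inv \<rho> x" using inv_in x by auto
  hence sub: "A1 \<union> C \<union> E \<subseteq> {j\<in>Ds. \<rho> (j+1) < x}" unfolding A1_def C_def E_def Ds_def by auto
  have d1: "A1 \<inter> C = {}" "(A1 \<union> C) \<inter> E = {}" unfolding A1_def C_def E_def by auto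
  have "card (A1 \<union> C \<union> E) = card (A1 \<union> C) + card E"
    using fin d1 by (intro card_Un_disjoint) auto
  also have "card (A1 \<union> C) = card A1 + card C" using fin d1 by (intro card_Un_disjoint) auto
  finally have "card (A1 \<union> C \<union> E) = card A1 + card C + card E" .
  moreover have "card (A1 \<union> C \<union> E) \<le> card {j\<in>Ds. \<rho> (j+1) < x}"
    using sub finite_Ds by (intro card_mono) auto
  ultimately show ?thesis using c1 c2 cC cE by simp
qed

lemma count_T_NT:
  assumes x: "x \<in> {1..M}"
  shows "card {y\<in>NT. y < x} + card {t\<in>T. t < x} = x - 1"
proof -
  have "{y\<in>NT. y < x} \<union> {t\<in>T. t < x} = {1..<x}" using x T_sub unfolding NT_eq by auto
  moreover have "{y\<in>NT. y < x} \<inter> {t\<in>T. t < x} = {}" unfolding NT_eq by auto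
  ultimately show ?thesis by (metis card_Un_disjoint card_atLeastLessThan finite_Un finite_atLeastLessThan)
qed

lemma count_B_NB:
  assumes x: "x \<in> {1..M}"
  shows "card {y\<in>NB. y < x} + card {t\<in>B. t < x} = x - 1"
proof -
  have "{y\<in>NB. y < x} \<union> {t\<in>B. t < x} = {1..<x}" using x B_sub unfolding NB_eq by auto
  moreover have "{y\<in>NB. y < x} \<inter> {t\<in>B. t < x} = {}" unfolding NB_eq by auto
  ultimately show ?thesis by (metis card_Un_disjoint card_atLeastLessThan finite_Un finite_atLeastLessThan)
qed

lemma c_le_T: "x \<in> {1..M} \<Longrightarrow> c x \<le> card {y\<in>T. x < y}"
proof -
  assume x: "x \<in> {1..M}"
  define C where "C = {j. inv \<rho> x < j \<and> j < M \<and> \<rho> (j + 1) < x \<and> x < \<rho> j}"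
  have "1 \<le> inv \<rho> x" using inv_in x by auto
  hence "\<rho> ` C \<subseteq> {y\<in>T. x < y}" unfolding C_def T_img Ds_def by auto
  hence "card C \<le> card {y\<in>T. x < y}" using finT by (intro card_inj_on_le[OF inj_rho]) auto
  thus ?thesis unfolding C_def cstat_def by simp
qed

lemma c_le_NT: "x \<in> NT \<Longrightarrow> c x \<le> card {y\<in>NT. y < x}"
proof -
  assume x: "x \<in> NT"
  hence x1: "x \<in> {1..M}" "x \<notin> T" unfolding NT_eq by auto
  have "card {b\<in>B. b < x} \<le> card {1..<x}" by (intro card_mono) (use B_sub in auto)
  thus ?thesis using count_key[OF x1(1)] count_T_NT[OF x1(1)] x1(2) by simp
qed

end



context rsetup begin

abbreviation "F' \<equiv> fword' M \<rho>"
abbreviation "G' \<equiv> gword' M \<rho>"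
abbreviation "F \<equiv> fword M \<rho>"
abbreviation "G \<equiv> gword M \<rho>"

lemma finNT: "finite NT" unfolding NT_eq by simp
lemma finNB: "finite NB" unfolding NB_eq by simp

lemma F'_props: "distinct F' \<and> set F' = T \<and> (\<forall>k<length F'. card {l. l < k \<and> F'!l > F'!k} = c (F'!k))"
proof -
  have "\<forall>x\<in>T. c x \<le> card {y\<in>T. x < y}" using c_le_T T_sub by blast
  from thm_A_THE[OF finT this, unfolded Let_def] show ?thesis unfolding fword'_def .
qed

lemma G'_props: "distinct G' \<and> set G' = NT \<and> (\<forall>k<length G'. card {l. k < l \<and> l < length G' \<and> G'!l < G'!k} = c (G'!k))"
proof -
  have "\<forall>x\<in>NT. c x \<le> card {y\<in>NT. y < x}" using c_le_NT by blast
  from thm_B_THE[OF finNT this, unfolded Let_def] show ?thesis unfolding gword'_def .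
qed

lemma F_props: "sorted_wrt (<) F" "distinct F" "set F = B"
  unfolding fword_def
    apply (rule strict_sorted_list_of_set)
   apply (rule distinct_sorted_list_of_set)
  using finB by (rule set_sorted_list_of_set)
lemma G_props: "sorted_wrt (<) G" "distinct G" "set G = NB"
  unfolding gword_def
    apply (rule strict_sorted_list_of_set)
   apply (rule distinct_sorted_list_of_set)
  using finNB by (rule set_sorted_list_of_set)


lemma len_F: "length F = length F'"
proof -
  have "length F = card B" using F_props distinct_card by metis
  moreover have "length F' = card T" using F'_props distinct_card by metis
  ultimately show ?thesis using card_TB by simp
qed

lemma len_G: "length G = length G'"
proof -
  have "length G = card NB" using G_props distinct_card by metis
  also have "card NB = M - card B" unfolding NB_eq using B_sub finB by (simp add: card_Diff_subset)
  also have "\<dots> = M - card T" using card_TB by simp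
  also have "\<dots> = card NT" unfolding NT_eq using T_sub finT by (simp add: card_Diff_subset)
  also have "\<dots> = length G'" using G'_props distinct_card by metis
  finally show ?thesis .
qed

lemma TNT_disj: "T \<inter> NT = {}" unfolding NT_eq by auto
lemma dist_keys: "distinct (F' @ G')" using F'_props G'_props TNT_disj by auto
lemma len_keys: "length (F' @ G') = length (F @ G)" using len_F len_G by simp

lemma tau_F: "k < length F' \<Longrightarrow> \<tau> (F'!k) = F!k"
proof -
  assume k: "k < length F'"
  have in1: "F'!k \<in> {1..M}" using k F'_props T_sub nth_mem by blast
  have "map_of (zip (F' @ G') (F @ G)) ((F' @ G')!k) = Some ((F @ G)!k)"
    using map_of_zip_nth[OF len_keys dist_keys] k len_F by simp
  thus ?thesis using k len_F in1 unfolding Phi_def by (simp add: nth_append)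
qed

lemma Phi_lookup: "b \<in> {1..M} \<Longrightarrow> map_of (zip (F' @ G') (F @ G)) b = Some a \<Longrightarrow> \<tau> b = a"
  unfolding Phi_def by simp

lemma tau_G: "k < length G' \<Longrightarrow> \<tau> (G'!k) = G!k"
proof -
  assume k: "k < length G'"
  have in1: "G'!k \<in> {1..M}" using k G'_props NT_eq nth_mem by blast
  have i: "length F' + k < length (F @ G)" using k len_F len_G by simp
  have e1: "map_of (zip (F' @ G') (F @ G)) ((F' @ G')!(length F' + k)) = Some ((F @ G)!(length F' + k))"
    by (rule map_of_zip_nth[OF len_keys dist_keys i])
  have e2: "(F' @ G')!(length F' + k) = G'!k" by (simp add: nth_append)
  have e3: "(F @ G)!(length F' + k) = G!k" using len_F by (simp add: nth_append)
  have "map_of (zip (F' @ G') (F @ G)) (G'!k) = Some (G!k)" using e1 e2 e3 by metis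
  thus ?thesis using Phi_lookup in1 by blast
qed

lemma T_or_NT: "x \<in> {1..M} \<Longrightarrow> x \<in> T \<or> x \<in> NT" unfolding NT_eq by auto


lemma claimA_T:
  assumes x: "x \<in> T"
  shows "\<tau> x < x \<and> \<tau> x \<in> B"
proof -
  obtain k where k: "k < length F'" "F'!k = x" using x F'_props by (metis in_set_conv_nth)
  have tx: "\<tau> x = F!k" using tau_F k by metis
  have kF: "k < length F" using k len_F by simp
  have inB: "F!k \<in> B" using kF F_props nth_mem by blast
  have x1: "x \<in> {1..M}" using x T_sub by auto
  have "F!k < x"
  proof (rule ccontr)
    assume "\<not> F!k < x"
    hence "{b\<in>B. b < x} \<subseteq> {y \<in> set F. y < F!k}" using F_props by auto
    hence "card {b\<in>B. b < x} \<le> card {y \<in> set F. y < F!k}" by (intro card_mono) auto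
    hence le1: "card {b\<in>B. b < x} \<le> k" using sorted_card_less[OF F_props(1) kF] by simp
    have dF': "distinct F'" using F'_props by simp
    have split: "{l. l < k} = {l. l < k \<and> F'!l > x} \<union> {l. l < k \<and> F'!l < x}"
    proof -
      have "\<And>l. l < k \<Longrightarrow> F'!l \<noteq> x" using k dF' by (metis nth_eq_iff_index_eq order.strict_trans less_irrefl)
      thus ?thesis by (auto simp: neq_iff)
    qed
    have "k = card {l. l < k}" by simp
    also have "\<dots> = card {l. l < k \<and> F'!l > x} + card {l. l < k \<and> F'!l < x}"
      unfolding split by (rule card_Un_disjoint) auto
    also have "card {l. l < k \<and> F'!l > x} = c x" using F'_props k by metis
    also have "card {l. l < k \<and> F'!l < x} \<le> card {t\<in>T. t < x}"
    proof (rule card_inj_on_le[of "nth F'"])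
      show "inj_on (nth F') {l. l < k \<and> F'!l < x}" using dF' k by (intro inj_on_nth) auto
      show "nth F' ` {l. l < k \<and> F'!l < x} \<subseteq> {t\<in>T. t < x}" using k F'_props by auto
      show "finite {t\<in>T. t < x}" using finT by simp
    qed
    finally have "k \<le> c x + card {t\<in>T. t < x}" by simp
    thus False using count_key[OF x1] x le1 by simp
  qed
  thus ?thesis using tx inB by simp
qed

lemma claimA_NT:
  assumes x: "x \<in> NT"
  shows "x \<le> \<tau> x \<and> \<tau> x \<in> NB"
proof -
  obtain k where k: "k < length G'" "G'!k = x" using x G'_props by (metis in_set_conv_nth)
  have tx: "\<tau> x = G!k" using tau_G k by metis
  have kG: "k < length G" using k len_G by simp
  have inNB: "G!k \<in> NB" using kG G_props nth_mem by blast
  have x1: "x \<in> {1..M}" "x \<notin> T" using x NT_eq by auto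
  have "x \<le> G!k"
  proof (rule ccontr)
    assume "\<not> x \<le> G!k"
    hence "{y \<in> set G. y \<le> G!k} \<subseteq> {b\<in>NB. b < x}" using G_props by auto
    hence "card {y \<in> set G. y \<le> G!k} \<le> card {b\<in>NB. b < x}" using finNB by (intro card_mono) auto
    hence le1: "Suc k \<le> card {b\<in>NB. b < x}" using sorted_card_le[OF G_props(1) kG] by simp
    have dG': "distinct G'" using G'_props by simp
    have sG: "NT = set G'" using G'_props by simp
    have "{y\<in>NT. y < x} = nth G' ` {l. l < length G' \<and> G'!l < x}"
      unfolding sG by (auto simp: in_set_conv_nth)
    hence "card {y\<in>NT. y < x} = card {l. l < length G' \<and> G'!l < x}"
      using dG' by (simp add: card_image inj_on_nth)
    also have "{l. l < length G' \<and> G'!l < x} = {l. l < k \<and> G'!l < x} \<union> {l. k < l \<and> l < length G' \<and> G'!l < x}"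
      using k by auto (metis less_irrefl nat_neq_iff)
    also have "card \<dots> = card {l. l < k \<and> G'!l < x} + card {l. k < l \<and> l < length G' \<and> G'!l < x}"
      by (rule card_Un_disjoint) auto
    also have "card {l. k < l \<and> l < length G' \<and> G'!l < x} = c x" using G'_props k by metis
    also have "card {l. l < k \<and> G'!l < x} \<le> k"
      using card_mono[of "{l. l < k}" "{l. l < k \<and> G'!l < x}"] by auto
    finally have "card {y\<in>NT. y < x} \<le> k + c x" by simp
    thus False using count_key[OF x1(1)] count_T_NT[OF x1(1)] count_B_NB[OF x1(1)] x1(2) le1 by simp
  qed
  thus ?thesis using tx inNB by simp
qed


lemma tau_perm: "\<tau> permutes {1..M}"
proof (rule bij_imp_permutes)
  show "\<And>x. x \<notin> {1..M} \<Longrightarrow> \<tau> x = x" unfolding Phi_def by auto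
  have img: "\<tau> ` {1..M} \<subseteq> {1..M}"
  proof
    fix y assume "y \<in> \<tau> ` {1..M}"
    then obtain x where x: "x \<in> {1..M}" "y = \<tau> x" by auto
    thus "y \<in> {1..M}" using T_or_NT[OF x(1)] claimA_T claimA_NT B_sub NB_eq by blast
  qed
  have inj: "inj_on \<tau> {1..M}"
  proof (rule inj_onI)
    fix x y assume x: "x \<in> {1..M}" and y: "y \<in> {1..M}" and e: "\<tau> x = \<tau> y"
    show "x = y"
    proof (cases "x \<in> T")
      case True
      hence "\<tau> y \<in> B" using claimA_T e by metis
      hence yT: "y \<in> T" using T_or_NT[OF y] claimA_NT NB_eq by blast
      obtain k where k: "k < length F'" "F'!k = x" using True F'_props by (metis in_set_conv_nth)
      obtain l where l: "l < length F'" "F'!l = y" using yT F'_props by (metis in_set_conv_nth)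
      have "F!k = F!l" using e tau_F k l by metis
      hence "k = l" using F_props(2) k l len_F by (simp add: nth_eq_iff_index_eq)
      thus ?thesis using k l by simp
    next
      case False
      hence xN: "x \<in> NT" using T_or_NT[OF x] by simp
      hence "\<tau> y \<in> NB" using claimA_NT e by metis
      hence yN: "y \<in> NT" using T_or_NT[OF y] claimA_T NB_eq by blast
      obtain k where k: "k < length G'" "G'!k = x" using xN G'_props by (metis in_set_conv_nth)
      obtain l where l: "l < length G'" "G'!l = y" using yN G'_props by (metis in_set_conv_nth)
      have "G!k = G!l" using e tau_G k l by metis
      hence "k = l" using G_props(2) k l len_G by (simp add: nth_eq_iff_index_eq)
      thus ?thesis using k l by simp
    qed
  qed
  show "bij_betw \<tau> {1..M} {1..M}" unfolding bij_betw_def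
    using inj endo_inj_surj[OF _ img inj] by simp
qed

end



context rsetup begin

lemma cross:
  assumes x: "x \<in> {1..M}" "x \<noteq> 1"
  shows "inv \<rho> x < a \<Longrightarrow> a \<le> M \<Longrightarrow> card {j. a \<le> j \<and> j < M \<and> \<rho> (Suc j) < x \<and> x < \<rho> j}
     = card {j. a \<le> j \<and> j < M \<and> \<rho> j < x \<and> x < \<rho> (Suc j)} + (if x < \<rho> a then 1 else 0)"
proof (induction "M - a" arbitrary: a)
  case 0
  hence "a = M" by simp
  have e1: "{j. M \<le> j \<and> j < M \<and> \<rho> (Suc j) < x \<and> x < \<rho> j} = {}" by auto
  have e2: "{j. M \<le> j \<and> j < M \<and> \<rho> j < x \<and> x < \<rho> (Suc j)} = {}" by auto
  show ?case unfolding \<open>a = M\<close> e1 e2 using lastM x by simp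
next
  case (Suc d)
  hence aM: "a < M" by simp
  have IH: "card {j. Suc a \<le> j \<and> j < M \<and> \<rho> (Suc j) < x \<and> x < \<rho> j}
     = card {j. Suc a \<le> j \<and> j < M \<and> \<rho> j < x \<and> x < \<rho> (Suc j)} + (if x < \<rho> (Suc a) then 1 else 0)"
    using Suc by simp
  have n1: "\<rho> a \<noteq> x" using Suc(3) rho_eq_iff by auto
  have n2: "\<rho> (Suc a) \<noteq> x" using Suc(3) rho_eq_iff by auto
  have s1: "card {j. a \<le> j \<and> j < M \<and> \<rho> (Suc j) < x \<and> x < \<rho> j}
     = (if \<rho> (Suc a) < x \<and> x < \<rho> a then 1 else 0) + card {j. Suc a \<le> j \<and> j < M \<and> \<rho> (Suc j) < x \<and> x < \<rho> j}"
    using card_step[OF aM, of "\<lambda>j. \<rho> (Suc j) < x \<and> x < \<rho> j"] by simp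
  have s2: "card {j. a \<le> j \<and> j < M \<and> \<rho> j < x \<and> x < \<rho> (Suc j)}
     = (if \<rho> a < x \<and> x < \<rho> (Suc a) then 1 else 0) + card {j. Suc a \<le> j \<and> j < M \<and> \<rho> j < x \<and> x < \<rho> (Suc j)}"
    using card_step[OF aM, of "\<lambda>j. \<rho> j < x \<and> x < \<rho> (Suc j)"] by simp
  show ?case unfolding s1 s2 IH using n1 n2 by (auto simp: neq_iff)
qed

definition "Ucnt x = card {j. inv \<rho> x < j \<and> j < M \<and> \<rho> j < x \<and> x < \<rho> (Suc j)}"

lemma inv_lt_M: "x \<in> {1..M} \<Longrightarrow> x \<noteq> 1 \<Longrightarrow> inv \<rho> x < M"
proof -
  assume x: "x \<in> {1..M}" "x \<noteq> 1"
  have "inv \<rho> x \<noteq> M" using x lastM rho_eq_iff by metis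
  thus ?thesis using inv_in[OF x(1)] by simp
qed

lemma cstat_cross:
  assumes x: "x \<in> {1..M}" "x \<noteq> 1"
  shows "c x = Ucnt x + (if x < \<rho> (Suc (inv \<rho> x)) then 1 else 0)"
proof -
  have l: "inv \<rho> x < Suc (inv \<rho> x)" "Suc (inv \<rho> x) \<le> M" using inv_lt_M[OF x] by auto
  have "\<And>P. {j. Suc (inv \<rho> x) \<le> j \<and> P j} = {j. inv \<rho> x < j \<and> P j}" by (auto simp: Suc_le_eq)
  thus ?thesis using cross[OF x l] unfolding cstat_def Ucnt_def by simp
qed

lemma c_NT: "x \<in> NT \<Longrightarrow> x \<noteq> 1 \<Longrightarrow> c x = Ucnt x + 1"
proof -
  assume x: "x \<in> NT" "x \<noteq> 1"
  hence x1: "x \<in> {1..M}" "x \<notin> T" using NT_eq by auto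
  have lt: "inv \<rho> x < M" using inv_lt_M[OF x1(1) x(2)] .
  hence "\<not> \<rho> (Suc (inv \<rho> x)) < x" using x1 T_iff by simp
  moreover have "\<rho> (Suc (inv \<rho> x)) \<noteq> x" using rho_eq_iff by simp
  ultimately have "x < \<rho> (Suc (inv \<rho> x))" by simp
  thus ?thesis using cstat_cross[OF x1(1) x(2)] by simp
qed

lemma c_T: "x \<in> T \<Longrightarrow> c x = Ucnt x"
proof -
  assume x: "x \<in> T"
  hence x1: "x \<in> {1..M}" "inv \<rho> x < M" "\<rho> (Suc (inv \<rho> x)) < x" using T_iff by auto
  have "\<rho> (Suc (inv \<rho> x)) \<in> {1..M}" using x1(2) by (intro rho_in) auto
  hence "x \<noteq> 1" using x1 by auto
  thus ?thesis using cstat_cross[OF x1(1)] x1(3) by simp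
qed

lemma one_NT: "1 \<in> NT"
proof -
  have "inv \<rho> 1 = M" using lastM rho_eq_iff by metis
  thus ?thesis unfolding NT_eq using T_iff M2 by auto
qed

lemma M_NB: "M \<in> NB"
proof -
  have "M \<notin> B"
  proof
    assume "M \<in> B"
    hence b: "M \<in> {1..M}" "2 \<le> inv \<rho> M" "M < \<rho> (inv \<rho> M - 1)" using B_iff by auto
    have "inv \<rho> M \<le> M" using inv_in[OF b(1)] by simp
    hence "inv \<rho> M - 1 \<in> {1..M}" using b(2) by auto
    thus False using rho_in b(3) by fastforce
  qed
  thus ?thesis unfolding NB_eq using M2 by auto
qed

lemma tau_one: "\<tau> 1 = M"
proof -
  define L where "L = length G"
  have MG: "M \<in> set G" using M_NB G_props by simp
  hence L0: "0 < L" unfolding L_def by (cases G) auto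
  have GL: "G!(L-1) = M"
  proof -
    obtain i where i: "i < L" "G!i = M" using MG unfolding L_def by (metis in_set_conv_nth)
    have "G!(L-1) \<in> NB" using L0 G_props nth_mem unfolding L_def by (metis diff_less zero_less_one)
    hence le: "G!(L-1) \<le> M" unfolding NB_eq by auto
    have "\<not> i < L - 1"
    proof
      assume "i < L - 1"
      moreover have "L - 1 < length G" using L0 unfolding L_def by simp
      moreover have "i < length G" using i unfolding L_def by simp
      ultimately have "G!i < G!(L-1)" using sorted_less_iff[OF G_props(1), of i "L-1"] by blast
      thus False using i le by simp
    qed
    hence "i = L - 1" using i by simp
    thus ?thesis using i by simp
  qed
  have LG': "L - 1 < length G'" using L0 len_G unfolding L_def by simp
  define y where "y = G'!(L-1)"
  have yN: "y \<in> NT" using LG' G'_props nth_mem unfolding y_def by blast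
  have "c y = card {l. L - 1 < l \<and> l < length G' \<and> G'!l < y}" using G'_props LG' unfolding y_def by metis
  also have "{l. L - 1 < l \<and> l < length G' \<and> G'!l < y} = {}" using len_G L0 unfolding L_def by auto
  finally have "c y = 0" by simp
  hence "y = 1" using c_NT[OF yN] by fastforce
  hence "\<tau> 1 = G!(L-1)" using tau_G[OF LG'] unfolding y_def by simp
  thus ?thesis using GL by simp
qed

lemma nest_T:
  assumes x: "x \<in> T"
  shows "card {j\<in>{1..M}. \<tau> j < \<tau> x \<and> x < j} = c x"
proof -
  obtain k where k: "k < length F'" "F'!k = x" using x F'_props by (metis in_set_conv_nth)
  have kF: "k < length F" using k len_F by simp
  have tx: "\<tau> x = F!k" using tau_F k by metis
  have dF': "distinct F'" using F'_props by simp
  have "{j\<in>{1..M}. \<tau> j < \<tau> x \<and> x < j} = nth F' ` {l. l < k \<and> F'!l > x}"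
  proof (rule set_eqI, rule iffI)
    fix j assume j: "j \<in> {j\<in>{1..M}. \<tau> j < \<tau> x \<and> x < j}"
    have "j \<in> T"
    proof (rule ccontr)
      assume "j \<notin> T"
      hence "j \<in> NT" using j NT_eq by auto
      hence "j \<le> \<tau> j" using claimA_NT by blast
      moreover have "\<tau> x < x" using claimA_T[OF x] by simp
      ultimately show False using j by simp
    qed
    then obtain l where l: "l < length F'" "F'!l = j" using F'_props by (metis in_set_conv_nth)
    have "F!l < F!k" using j tx tau_F[OF l(1)] l(2) by simp
    hence "l < k" using sorted_less_iff[OF F_props(1)] l kF len_F by simp
    thus "j \<in> nth F' ` {l. l < k \<and> F'!l > x}" using l j by auto
  next
    fix j assume "j \<in> nth F' ` {l. l < k \<and> F'!l > x}"
    then obtain l where l: "l < k" "F'!l > x" "j = F'!l" by auto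
    have lF: "l < length F'" using l k by simp
    have "j \<in> T" using lF F'_props l(3) nth_mem by blast
    hence "j \<in> {1..M}" using T_sub by auto
    moreover have "\<tau> j = F!l" using tau_F[OF lF] l(3) by simp
    moreover have "F!l < F!k" using sorted_less_iff[OF F_props(1)] l(1) kF by simp
    ultimately show "j \<in> {j\<in>{1..M}. \<tau> j < \<tau> x \<and> x < j}" using tx l by simp
  qed
  moreover have "inj_on (nth F') {l. l < k \<and> F'!l > x}" using dF' k by (intro inj_on_nth) auto
  ultimately have "card {j\<in>{1..M}. \<tau> j < \<tau> x \<and> x < j} = card {l. l < k \<and> F'!l > x}"
    by (simp add: card_image)
  also have "\<dots> = c x" using F'_props k by metis
  finally show ?thesis .
qed

lemma nest_NT:
  assumes x: "x \<in> NT"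
  shows "card {j\<in>{1..M}. j < x \<and> \<tau> x < \<tau> j} = c x"
proof -
  obtain k where k: "k < length G'" "G'!k = x" using x G'_props by (metis in_set_conv_nth)
  have kG: "k < length G" using k len_G by simp
  have tx: "\<tau> x = G!k" using tau_G k by metis
  have dG': "distinct G'" using G'_props by simp
  have "{j\<in>{1..M}. j < x \<and> \<tau> x < \<tau> j} = nth G' ` {l. k < l \<and> l < length G' \<and> G'!l < x}"
  proof (rule set_eqI, rule iffI)
    fix j assume j: "j \<in> {j\<in>{1..M}. j < x \<and> \<tau> x < \<tau> j}"
    have "j \<in> NT"
    proof (rule ccontr)
      assume "j \<notin> NT"
      hence "j \<in> T" using j NT_eq by auto
      hence "\<tau> j < j" using claimA_T by blast
      moreover have "x \<le> \<tau> x" using claimA_NT[OF x] by simp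
      ultimately show False using j by simp
    qed
    then obtain l where l: "l < length G'" "G'!l = j" using G'_props by (metis in_set_conv_nth)
    have "G!k < G!l" using j tx tau_G[OF l(1)] l(2) by simp
    hence "k < l" using sorted_less_iff[OF G_props(1)] l kG len_G by simp
    thus "j \<in> nth G' ` {l. k < l \<and> l < length G' \<and> G'!l < x}" using l j by auto
  next
    fix j assume "j \<in> nth G' ` {l. k < l \<and> l < length G' \<and> G'!l < x}"
    then obtain l where l: "k < l" "l < length G'" "G'!l < x" "j = G'!l" by auto
    have "j \<in> NT" using l(2) G'_props l(4) nth_mem by blast
    hence "j \<in> {1..M}" using NT_eq by auto
    moreover have "\<tau> j = G!l" using tau_G[OF l(2)] l(4) by simp
    moreover have "G!k < G!l" using sorted_less_iff[OF G_props(1)] l(1,2) kG len_G by simp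
    ultimately show "j \<in> {j\<in>{1..M}. j < x \<and> \<tau> x < \<tau> j}" using tx l by simp
  qed
  moreover have "inj_on (nth G') {l. k < l \<and> l < length G' \<and> G'!l < x}" using dG' by (intro inj_on_nth) auto
  ultimately have "card {j\<in>{1..M}. j < x \<and> \<tau> x < \<tau> j} = card {l. k < l \<and> l < length G' \<and> G'!l < x}"
    by (simp add: card_image)
  also have "\<dots> = c x" using G'_props k by metis
  finally show ?thesis .
qed

end



locale ssetup =
  fixes n :: nat and \<sigma> :: "nat \<Rightarrow> nat"
  assumes n1: "1 \<le> n" and sp: "\<sigma> permutes {1..n+1}"
begin

abbreviation "\<rho>h \<equiv> rho_hat (n+1) \<sigma>"

lemma s_in: "i \<in> {1..n+1} \<Longrightarrow> \<sigma> i \<in> {1..n+1}" by (metis sp permutes_in_image)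
lemma s_inv[simp]: "\<sigma> (inv \<sigma> x) = x" using sp permutes_inverses(1) by metis
lemma inv_s[simp]: "inv \<sigma> (\<sigma> x) = x" using sp permutes_inverses(2) by metis
lemma s_inv_in: "x \<in> {1..n+1} \<Longrightarrow> inv \<sigma> x \<in> {1..n+1}" using sp permutes_inv permutes_in_image by metis
lemma s_eq: "\<sigma> i = \<sigma> j \<Longrightarrow> i = j" by (metis inv_s)

lemma rh_val: "i \<in> {1..n+1} \<Longrightarrow> \<rho>h i = \<sigma> i + 1" unfolding rho_hat_def by simp
lemma rh_last: "\<rho>h (n+2) = 1" unfolding rho_hat_def by simp

lemma rh_perm: "\<rho>h permutes {1..n+2}"
proof (rule bij_imp_permutes)
  show "\<And>x. x \<notin> {1..n+2} \<Longrightarrow> \<rho>h x = x" unfolding rho_hat_def by auto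
  have img: "\<rho>h ` {1..n+2} \<subseteq> {1..n+2}"
  proof
    fix y assume "y \<in> \<rho>h ` {1..n+2}"
    then obtain i where i: "i \<in> {1..n+2}" "y = \<rho>h i" by auto
    show "y \<in> {1..n+2}"
    proof (cases "i = n+2")
      case True thus ?thesis using i rh_last by simp
    next
      case False
      hence "i \<in> {1..n+1}" using i by auto
      thus ?thesis using i rh_val s_in by fastforce
    qed
  qed
  have inj: "inj_on \<rho>h {1..n+2}"
  proof (rule inj_onI)
    fix i j assume i: "i \<in> {1..n+2}" and j: "j \<in> {1..n+2}" and e: "\<rho>h i = \<rho>h j"
    have v: "\<And>k. k \<in> {1..n+2} \<Longrightarrow> k \<noteq> n+2 \<Longrightarrow> \<rho>h k = \<sigma> k + 1 \<and> k \<in> {1..n+1}"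
      using rh_val by auto
    show "i = j"
    proof (cases "i = n+2"; cases "j = n+2")
      assume "i = n+2" "j = n+2" thus ?thesis by simp
    next
      assume a: "i = n+2" "j \<noteq> n+2"
      thus ?thesis using e rh_last v[OF j] s_in[of j] by auto
    next
      assume a: "i \<noteq> n+2" "j = n+2"
      thus ?thesis using e rh_last v[OF i] s_in[of i] by auto
    next
      assume a: "i \<noteq> n+2" "j \<noteq> n+2"
      thus ?thesis using e v[OF i] v[OF j] s_eq by auto
    qed
  qed
  show "bij_betw \<rho>h {1..n+2} {1..n+2}" unfolding bij_betw_def
    using inj endo_inj_surj[OF _ img inj] by simp
qed

sublocale R: rsetup "n+2" "\<rho>h"
  using rh_perm rh_last by unfold_locales auto

abbreviation "\<tau>0 \<equiv> Phi (n+2) \<rho>h"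
abbreviation "\<tau>' \<equiv> Psi (n+1) \<sigma>"

lemma tp: "i \<in> {1..n+1} \<Longrightarrow> \<tau>' i = \<tau>0 (Suc i)"
  unfolding Psi_def by (simp add: add.assoc)

lemma tau0_inj: "\<tau>0 a = \<tau>0 b \<Longrightarrow> a = b"
  using R.tau_perm permutes_inj by (metis injD)

lemma tau0_in: "a \<in> {1..n+2} \<Longrightarrow> \<tau>0 a \<in> {1..n+2}"
  using R.tau_perm permutes_in_image by metis

lemma tau'_perm: "\<tau>' permutes {1..n+1}"
proof (rule bij_imp_permutes)
  show "\<And>x. x \<notin> {1..n+1} \<Longrightarrow> \<tau>' x = x" unfolding Psi_def by auto
  have img: "\<tau>' ` {1..n+1} \<subseteq> {1..n+1}"
  proof
    fix y assume "y \<in> \<tau>' ` {1..n+1}"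
    then obtain i where i: "i \<in> {1..n+1}" "y = \<tau>' i" by auto
    have y: "y = \<tau>0 (Suc i)" using tp[OF i(1)] i(2) by simp
    have "y \<in> {1..n+2}" using y tau0_in i(1) by auto
    moreover have "y \<noteq> n+2"
    proof
      assume "y = n+2"
      hence "\<tau>0 (Suc i) = \<tau>0 1" using y R.tau_one by simp
      hence "Suc i = 1" by (rule tau0_inj)
      thus False using i by simp
    qed
    ultimately show "y \<in> {1..n+1}" by auto
  qed
  have inj: "inj_on \<tau>' {1..n+1}"
    by (rule inj_onI) (metis tp tau0_inj nat.inject)
  show "bij_betw \<tau>' {1..n+1} {1..n+1}" unfolding bij_betw_def
    using inj endo_inj_surj[OF _ img inj] by simp
qed

lemma inv_tau': "y \<in> {1..n+1} \<Longrightarrow> inv \<tau>' y = inv \<tau>0 y - 1"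
proof -
  assume y: "y \<in> {1..n+1}"
  define b where "b = inv \<tau>0 y"
  have tb: "\<tau>0 b = y" unfolding b_def using R.tau_perm permutes_inverses(1) by metis
  have ip: "inv \<tau>0 permutes {1..n+2}" by (rule permutes_inv[OF R.tau_perm])
  have y2: "y \<in> {1..n+2}" using y by auto
  have bin: "b \<in> {1..n+2}" unfolding b_def using permutes_in_image[OF ip] y2 by simp
  have "b \<noteq> 1" using tb R.tau_one y by auto
  hence b1: "b - 1 \<in> {1..n+1}" "Suc (b - 1) = b" using bin by auto
  have "\<tau>' (b - 1) = y" using tp[OF b1(1)] b1(2) tb by simp
  thus ?thesis using permutes_inv_eq[OF tau'_perm] unfolding b_def by metis
qed

lemma inv_rh: "i \<in> {1..n+1} \<Longrightarrow> inv \<rho>h (Suc i) = inv \<sigma> i"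
proof -
  assume i: "i \<in> {1..n+1}"
  have "\<rho>h (inv \<sigma> i) = Suc i" using rh_val[OF s_inv_in[OF i]] by simp
  thus ?thesis using permutes_inv_eq[OF rh_perm] by metis
qed

end



context ssetup begin

abbreviation "TT \<equiv> desc_tops (n+2) \<rho>h"
abbreviation "BB \<equiv> desc_bots (n+2) \<rho>h"
abbreviation "NTT \<equiv> nondesc_tops (n+2) \<rho>h"

lemma yzl1: "i \<in> {1..n} \<Longrightarrow> (i < \<tau>' i) = (Suc i \<notin> TT)"
proof -
  assume i: "i \<in> {1..n}"
  have x: "Suc i \<in> {1..n+2}" using i by auto
  have e: "\<tau>' i = \<tau>0 (Suc i)" using tp i by auto
  show ?thesis
  proof (cases "Suc i \<in> TT")
    case True thus ?thesis using R.claimA_T[OF True] e by simp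
  next
    case False
    hence "Suc i \<in> NTT" using R.T_or_NT[OF x] by blast
    thus ?thesis using R.claimA_NT e False by fastforce
  qed
qed

lemma yzl2: "i \<in> {1..n} \<Longrightarrow> (i + 1 \<le> inv \<tau>' (i + 1)) = (Suc i \<in> BB)"
proof -
  assume i: "i \<in> {1..n}"
  have e: "inv \<tau>' (Suc i) = inv \<tau>0 (Suc i) - 1" using inv_tau' i by auto
  define b where "b = inv \<tau>0 (Suc i)"
  have tb: "\<tau>0 b = Suc i" unfolding b_def using R.tau_perm permutes_inverses(1) by metis
  have ip: "inv \<tau>0 permutes {1..n+2}" by (rule permutes_inv[OF R.tau_perm])
  have bin: "b \<in> {1..n+2}" unfolding b_def using permutes_in_image[OF ip] i by simp
  show ?thesis
  proof (cases "b \<in> TT")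
    case True
    thus ?thesis using R.claimA_T[OF True] tb e unfolding b_def by auto
  next
    case False
    hence bN: "b \<in> NTT" using R.T_or_NT[OF bin] by blast
    hence "b \<le> Suc i" "Suc i \<in> nondesc_bots (n+2) \<rho>h" using R.claimA_NT[OF bN] tb by auto
    thus ?thesis using e R.NB_eq unfolding b_def by auto
  qed
qed

lemma ext_prev: "i \<in> {1..n} \<Longrightarrow> (i < ext0 n \<sigma> (inv \<sigma> i - 1)) = (Suc i \<in> BB) \<and> ext0 n \<sigma> (inv \<sigma> i - 1) \<noteq> i"
proof -
  assume i: "i \<in> {1..n}"
  define k where "k = inv \<sigma> i"
  have k: "k \<in> {1..n+1}" "\<sigma> k = i" unfolding k_def using s_inv_in i by auto
  have ik: "inv \<rho>h (Suc i) = k" unfolding k_def using inv_rh i by auto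
  have x: "Suc i \<in> {1..n+2}" using i by auto
  show ?thesis
  proof (cases "k = 1")
    case True
    thus ?thesis unfolding k_def[symmetric] using R.B_iff ik i by (auto simp: ext0_def)
  next
    case False
    hence k1: "k - 1 \<in> {1..n+1}" using k by auto
    have "ext0 n \<sigma> (k - 1) = \<sigma> (k - 1)" using k1 unfolding ext0_def by auto
    moreover have "\<rho>h (k - 1) = \<sigma> (k - 1) + 1" using rh_val[OF k1] .
    moreover have "\<sigma> (k - 1) \<noteq> i"
    proof
      assume "\<sigma> (k - 1) = i"
      hence "\<sigma> (k - 1) = \<sigma> k" using k by simp
      hence "k - 1 = k" by (rule s_eq)
      moreover have "1 \<le> k" using k by simp
      ultimately show False by arith
    qed
    ultimately show ?thesis unfolding k_def[symmetric] using R.B_iff[of "Suc i"] ik x False k by auto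
  qed
qed

lemma ext_next: "i \<in> {1..n} \<Longrightarrow> (ext0 n \<sigma> (inv \<sigma> i + 1) < i) = (Suc i \<in> TT) \<and> ext0 n \<sigma> (inv \<sigma> i + 1) \<noteq> i"
proof -
  assume i: "i \<in> {1..n}"
  define k where "k = inv \<sigma> i"
  have k: "k \<in> {1..n+1}" "\<sigma> k = i" unfolding k_def using s_inv_in i by auto
  have ik: "inv \<rho>h (Suc i) = k" unfolding k_def using inv_rh i by auto
  have x: "Suc i \<in> {1..n+2}" using i by auto
  show ?thesis
  proof (cases "k = n + 1")
    case True
    have "\<rho>h (Suc k) = 1" using rh_last True by simp
    thus ?thesis unfolding k_def[symmetric] using R.T_iff[of "Suc i"] ik i True by (auto simp: ext0_def)
  next
    case False
    hence k1: "k + 1 \<in> {1..n+1}" using k by auto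
    have "ext0 n \<sigma> (k + 1) = \<sigma> (k + 1)" using k1 unfolding ext0_def by auto
    moreover have "\<rho>h (k + 1) = \<sigma> (k + 1) + 1" using rh_val[OF k1] .
    moreover have "\<sigma> (k + 1) \<noteq> i" using k s_eq by fastforce
    ultimately show ?thesis unfolding k_def[symmetric] using R.T_iff[of "Suc i"] ik x k by auto
  qed
qed

lemma letter_eq: "i \<in> {1..n} \<Longrightarrow> fv_letter n \<sigma> i = yzl_letter \<tau>' i"
proof -
  assume i: "i \<in> {1..n}"
  note a = ext_prev[OF i] ext_next[OF i] yzl1[OF i] yzl2[OF i]
  show ?thesis unfolding fv_letter_def yzl_letter_def Let_def
    using a by (auto simp: not_less)
qed

end



lemma reindex_Suc: "card {j\<in>{1..n+1}. Q (Suc j)} = card {j\<in>{2..n+2}. Q j}"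
proof -
  have "Suc ` {j\<in>{1..n+1}. Q (Suc j)} = {j\<in>{2..n+2}. Q j}"
  proof (rule set_eqI, rule iffI)
    fix y assume "y \<in> {j\<in>{2..n+2}. Q j}"
    hence "y = Suc (y - 1)" "y - 1 \<in> {j\<in>{1..n+1}. Q (Suc j)}" by auto
    thus "y \<in> Suc ` {j\<in>{1..n+1}. Q (Suc j)}" by blast
  qed auto
  moreover have "inj_on Suc A" for A by simp
  ultimately show ?thesis by (metis card_image)
qed

context ssetup begin

lemma fvp_eq: "i \<in> {1..n} \<Longrightarrow> fv_p n \<sigma> i = R.Ucnt (Suc i)"
proof -
  assume i: "i \<in> {1..n}"
  define k where "k = inv \<sigma> i"
  have k: "k \<in> {1..n+1}" unfolding k_def using s_inv_in i by auto
  have ik: "inv \<rho>h (Suc i) = k" unfolding k_def using inv_rh i by auto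
  have "{j. k < j \<and> j < n + 1 \<and> \<sigma> j < i \<and> i < \<sigma> (j + 1)}
      = {j. k < j \<and> j < n + 2 \<and> \<rho>h j < Suc i \<and> Suc i < \<rho>h (Suc j)}"
  proof (rule set_eqI)
    fix j
    show "j \<in> {j. k < j \<and> j < n + 1 \<and> \<sigma> j < i \<and> i < \<sigma> (j + 1)} \<longleftrightarrow>
          j \<in> {j. k < j \<and> j < n + 2 \<and> \<rho>h j < Suc i \<and> Suc i < \<rho>h (Suc j)}"
    proof (cases "k < j \<and> j < n + 1")
      case True
      hence "j \<in> {1..n+1}" "Suc j \<in> {1..n+1}" using k by auto
      thus ?thesis using rh_val True by auto
    next
      case False
      moreover have "\<rho>h (Suc (n+1)) = 1" using rh_last by simp
      ultimately show ?thesis by (auto simp: less_Suc_eq)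
    qed
  qed
  thus ?thesis unfolding fv_p_def R.Ucnt_def ik k_def[symmetric] by simp
qed

lemma nest_eq: "i \<in> {1..n} \<Longrightarrow> nest n \<tau>' i = R.Ucnt (Suc i)"
proof -
  assume i: "i \<in> {1..n}"
  define x where "x = Suc i"
  define t where "t = \<tau>0 x"
  have ti: "\<tau>' i = t" unfolding t_def x_def using tp i by auto
  have x: "x \<in> {1..n+2}" "x \<noteq> 1" unfolding x_def using i by auto
  have tj: "\<And>j. j \<in> {1..n+1} \<Longrightarrow> \<tau>' j = \<tau>0 (Suc j)" using tp by blast
  show ?thesis
  proof (cases "x \<in> TT")
    case True
    have tx: "t < x" using R.claimA_T[OF True] unfolding t_def by simp
    have "{j\<in>{1..n+1}. (j < i \<and> i < \<tau>' i \<and> \<tau>' i < \<tau>' j) \<or> (\<tau>' j < \<tau>' i \<and> \<tau>' i \<le> i \<and> i < j)}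
        = {j\<in>{1..n+1}. (\<lambda>j'. \<tau>0 j' < t \<and> x < j') (Suc j)}"
    proof (rule Collect_cong, rule conj_cong, rule refl)
      fix j assume j: "j \<in> {1..n+1}"
      have "\<tau>' j = \<tau>0 (Suc j)" using tj[OF j] .
      thus "((j < i \<and> i < \<tau>' i \<and> \<tau>' i < \<tau>' j) \<or> (\<tau>' j < \<tau>' i \<and> \<tau>' i \<le> i \<and> i < j))
          = (\<lambda>j'. \<tau>0 j' < t \<and> x < j') (Suc j)" unfolding ti using tx unfolding x_def by auto
    qed
    hence "nest n \<tau>' i = card {j\<in>{2..n+2}. \<tau>0 j < t \<and> x < j}"
      unfolding nest_def using reindex_Suc[of n "\<lambda>j'. \<tau>0 j' < t \<and> x < j'"] by simp
    also have "{j\<in>{2..n+2}. \<tau>0 j < t \<and> x < j} = {j\<in>{1..n+2}. \<tau>0 j < \<tau>0 x \<and> x < j}"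
      unfolding t_def using x by auto
    also have "card \<dots> = cstat (n+2) \<rho>h x" using R.nest_T[OF True] by simp
    also have "\<dots> = R.Ucnt x" using R.c_T[OF True] by simp
    finally show ?thesis unfolding x_def .
  next
    case False
    hence xN: "x \<in> NTT" using R.T_or_NT[OF x(1)] by blast
    have tx: "x \<le> t" using R.claimA_NT[OF xN] unfolding t_def by simp
    have "{j\<in>{1..n+1}. (j < i \<and> i < \<tau>' i \<and> \<tau>' i < \<tau>' j) \<or> (\<tau>' j < \<tau>' i \<and> \<tau>' i \<le> i \<and> i < j)}
        = {j\<in>{1..n+1}. (\<lambda>j'. j' < x \<and> t < \<tau>0 j') (Suc j)}"
    proof (rule Collect_cong, rule conj_cong, rule refl)
      fix j assume j: "j \<in> {1..n+1}"
      have "\<tau>' j = \<tau>0 (Suc j)" using tj[OF j] .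
      thus "((j < i \<and> i < \<tau>' i \<and> \<tau>' i < \<tau>' j) \<or> (\<tau>' j < \<tau>' i \<and> \<tau>' i \<le> i \<and> i < j))
          = (\<lambda>j'. j' < x \<and> t < \<tau>0 j') (Suc j)" unfolding ti using tx unfolding x_def by auto
    qed
    hence "nest n \<tau>' i = card {j\<in>{2..n+2}. j < x \<and> t < \<tau>0 j}"
      unfolding nest_def using reindex_Suc[of n "\<lambda>j'. j' < x \<and> t < \<tau>0 j'"] by simp
    also have "{j\<in>{2..n+2}. j < x \<and> t < \<tau>0 j} = {j\<in>{1..n+2}. j < x \<and> \<tau>0 x < \<tau>0 j} - {1}"
      unfolding t_def by auto
    also have "card \<dots> = card {j\<in>{1..n+2}. j < x \<and> \<tau>0 x < \<tau>0 j} - 1"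
    proof -
      have "t \<in> {1..n+2}" unfolding t_def using tau0_in x by blast
      moreover have "t \<noteq> n + 2"
      proof
        assume "t = n + 2"
        hence "\<tau>0 x = \<tau>0 1" using R.tau_one unfolding t_def by simp
        thus False using tau0_inj x(2) by blast
      qed
      ultimately have "1 \<in> {j\<in>{1..n+2}. j < x \<and> \<tau>0 x < \<tau>0 j}" using R.tau_one x unfolding t_def by auto
      thus ?thesis by simp
    qed
    also have "card {j\<in>{1..n+2}. j < x \<and> \<tau>0 x < \<tau>0 j} = cstat (n+2) \<rho>h x" using R.nest_NT[OF xN] by simp
    also have "\<dots> = R.Ucnt x + 1" using R.c_NT[OF xN x(2)] by simp
    finally show ?thesis unfolding x_def by simp
  qed
qed

lemma main: "psiFV n \<sigma> = psiYZL n \<tau>'"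
proof -
  have "map (fv_letter n \<sigma>) [1..<n+1] = map (yzl_letter \<tau>') [1..<n+1]"
    by (rule map_cong[OF refl]) (use letter_eq in auto)
  moreover have "map (fv_p n \<sigma>) [1..<n+1] = map (nest n \<tau>') [1..<n+1]"
    by (rule map_cong[OF refl]) (use fvp_eq nest_eq in auto)
  ultimately show ?thesis unfolding psiFV_def psiYZL_def by simp
qed

end

theorem theorem2p5:
  fixes n :: nat and \<sigma> :: "nat \<Rightarrow> nat"
  assumes "n \<ge> 1" and "\<sigma> permutes {1..n+1}"
  shows "psiFV n \<sigma> = psiYZL n (Psi (n + 1) \<sigma>)"
proof -
  interpret ssetup n \<sigma> using assms by unfold_locales
  show ?thesis by (rule main)
qed



end
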